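(* Let $(X,d^X)$ and $(Y,d^Y)$ be compact metric spaces, let $f$ be a homeomorphism of $X$, let $\mu$ be a Borel measure on $X$ with $\mu(X)>0$, and let $h:X\to Y$ be a homeomorphism. Then (i) $UE^{h^*(\mu)}_{h\circ f\circ h^{-1}}(Y)=h(UE^\mu_f(X))$; (ii) $Sh^{h^*(\mu)}_{h\circ f\circ h^{-1}}(Y)=h(Sh^\mu_f(X))$, where $h^*(\mu)=\mu\circ h^{-1}$ is the Borel measure on $Y$ given by $h^*(\mu)(A)=\mu(h^{-1}(A))$.
   Context: For a homeomorphism $f$ of a compact metric space $(X,d)$ and a Borel measure $\mu$ on $X$: $B(x,\epsilon)=\{y:d(x,y)<\epsilon\}$. For a point $x$, $\mathfrak{c}>0$ and $z\in B(x,\mathfrak{c})$, $\Gamma^{\mathfrak{c}}_f(z)=\{y\in B(x,\mathfrak{c}): d(f^n(y),f^n(z))\le\mathfrak{c}\ \forall n\in\mathbb{Z}\}$. $x$ is a $\mu$-uniformly expansive point of $f$ if there is $\mathfrak{c}>0$ with $\mu(\Gamma^{\mathfrak{c}}_f(z))=0$ for every $z\in B(x,\mathfrak{c})$; $UE^\mu_f(X)$ is the set of such points. A $\delta$-pseudo orbit for $f$ is $\{x_n\}_{n\in\mathbb{Z}}$ with $d(f(x_n),x_{n+1})<\delta$ for all $n$; it is through a set $B$ if $x_0\in B$; it is $\epsilon$-traced if there is $y\in X$ with $d(f^n(y),x_n)<\epsilon$ for all $n$. $x$ is a $\mu$-shadowable point of $f$ if for every $\epsilon>0$ there are $\delta>0$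 and a Borel set $B$ with $\mu(X\setminus B)=0$ such that every $\delta$-pseudo orbit for $f$ through $B\cap B(x,\delta)$ is $\epsilon$-traced by some point of $X$; $Sh^\mu_f(X)$ is the set of such points. *)

theory Defs
  imports "HOL-Analysis.Analysis"
begin

definition zpow :: "'a set \<Rightarrow> ('a \<Rightarrow> 'a) \<Rightarrow> int \<Rightarrow> 'a \<Rightarrow> 'a" where
  "zpow X f n = (if n \<ge> 0 then f ^^ nat n else (inv_into X f) ^^ nat (- n))"

definition Gamma :: "'a::metric_space set \<Rightarrow> ('a \<Rightarrow> 'a) \<Rightarrow> real \<Rightarrow> 'a \<Rightarrow> 'a \<Rightarrow> 'a set" where
  "Gamma X f c x z = {y \<in> ball x c \<inter> X. \<forall>n::int. dist (zpow X f n y) (zpow X f n z) \<le> c}"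

definition UE :: "'a::metric_space measure \<Rightarrow> ('a \<Rightarrow> 'a) \<Rightarrow> 'a set \<Rightarrow> 'a set" where
  "UE M f X = {x \<in> X. \<exists>c>0. \<forall>z \<in> ball x c \<inter> X. emeasure M (Gamma X f c x z) = 0}"

definition pseudo_orbit :: "'a::metric_space set \<Rightarrow> ('a \<Rightarrow> 'a) \<Rightarrow> real \<Rightarrow> (int \<Rightarrow> 'a) \<Rightarrow> bool" where
  "pseudo_orbit X f \<delta> xs \<longleftrightarrow> (\<forall>n. xs n \<in> X) \<and> (\<forall>n. dist (f (xs n)) (xs (n + 1)) < \<delta>)"

definition traced :: "'a::metric_space set \<Rightarrow> ('a \<Rightarrow> 'a) \<Rightarrow> real \<Rightarrow> (int \<Rightarrow> 'a) \<Rightarrow> bool" where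
  "traced X f \<epsilon> xs \<longleftrightarrow> (\<exists>y\<in>X. \<forall>n. dist (zpow X f n y) (xs n) < \<epsilon>)"

definition Sh :: "'a::metric_space measure \<Rightarrow> ('a \<Rightarrow> 'a) \<Rightarrow> 'a set \<Rightarrow> 'a set" where
  "Sh M f X = {x \<in> X. \<forall>\<epsilon>>0. \<exists>\<delta>>0. \<exists>B \<in> sets M. emeasure M (X - B) = 0 \<and>
      (\<forall>xs. pseudo_orbit X f \<delta> xs \<and> xs 0 \<in> B \<inter> ball x \<delta> \<longrightarrow> traced X f \<epsilon> xs)}"

end

theory Submission imports Defs begin

lemma iter_cont:
  assumes "continuous_on X \<phi>" "\<phi> ` X \<subseteq> X"
  shows "continuous_on X (\<phi>^^m) \<and> (\<phi>^^m) ` X \<subseteq> X"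
proof (induction m)
  case 0 then show ?case by (simp add: continuous_on_id)
next
  case (Suc m)
  then have "continuous_on X (\<phi> \<circ> (\<phi>^^m))"
    using assms by (meson continuous_on_compose continuous_on_subset)
  then show ?case using Suc assms by auto
qed

lemma homeo_inv_into:
  assumes "homeomorphism X X f f'" "q \<in> X"
  shows "inv_into X f q = f' q"
proof -
  have "inj_on f X" using assms(1) unfolding homeomorphism_def by (metis inj_on_inverseI)
  moreover have "f' q \<in> X" "f (f' q) = q" using assms unfolding homeomorphism_def by auto
  ultimately show ?thesis by (simp add: inv_into_f_eq)
qed

lemma zpow_cont:
  assumes "homeomorphism X X f f'"
  shows "continuous_on X (zpow X f n) \<and> zpow X f n ` X \<subseteq> X"
proof -
  have f: "continuous_on X f" "f ` X \<subseteq> X" using assms unfolding homeomorphism_def by auto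
  have "continuous_on X f'" "f' ` X \<subseteq> X" using assms unfolding homeomorphism_def by auto
  moreover have "\<And>q. q \<in> X \<Longrightarrow> inv_into X f q = f' q" using homeo_inv_into[OF assms] by auto
  ultimately have g: "continuous_on X (inv_into X f)" "inv_into X f ` X \<subseteq> X"
    using continuous_on_cong by (metis, force)
  show ?thesis unfolding zpow_def using iter_cont[OF f] iter_cont[OF g] by auto
qed

lemma Gamma_meas:
  assumes "compact X" "homeomorphism X X f f'"
  shows "Gamma X f c x z \<in> sets (restrict_space borel X)"
proof -
  have cX: "closed X" using assms(1) compact_imp_closed by auto
  have "\<And>n. closed (X \<inter> (\<lambda>y. dist (zpow X f n y) (zpow X f n z)) -` {..c})"
    using zpow_cont[OF assms(2)]
    by (intro continuous_closed_preimage cX closed_atMost continuous_intros) auto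
  then have cl: "closed (X \<inter> (\<Inter>n. X \<inter> (\<lambda>y. dist (zpow X f n y) (zpow X f n z)) -` {..c}))"
    using cX by (intro closed_Int closed_INT) auto
  have eq: "Gamma X f c x z = ball x c \<inter> (X \<inter> (\<Inter>n. X \<inter> (\<lambda>y. dist (zpow X f n y) (zpow X f n z)) -` {..c}))"
    unfolding Gamma_def by auto
  have "Gamma X f c x z \<in> sets borel" unfolding eq
    using cl by (intro sets.Int borel_open borel_closed) auto
  moreover have "X \<in> sets borel" using cX by auto
  ultimately show ?thesis by (subst sets_restrict_space_iff) (auto simp: Gamma_def)
qed

lemma zpow_conj:
  assumes f: "homeomorphism X X f f'" and h: "homeomorphism X Y h k"
    and g: "\<forall>y\<in>Y. g y = h (f (k y))" and p: "p \<in> X"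
  shows "zpow Y g n (h p) = h (zpow X f n p)"
proof -
  have fX: "\<And>x. x \<in> X \<Longrightarrow> f x \<in> X" "\<And>x. x \<in> X \<Longrightarrow> f' x \<in> X"
    "\<And>x. x \<in> X \<Longrightarrow> f (f' x) = x" "\<And>x. x \<in> X \<Longrightarrow> f' (f x) = x"
    using f unfolding homeomorphism_def by auto
  have hX: "\<And>x. x \<in> X \<Longrightarrow> h x \<in> Y" "\<And>y. y \<in> Y \<Longrightarrow> k y \<in> X"
    "\<And>x. x \<in> X \<Longrightarrow> k (h x) = x" "\<And>y. y \<in> Y \<Longrightarrow> h (k y) = y"
    using h unfolding homeomorphism_def by auto
  have pos: "\<And>p. p \<in> X \<Longrightarrow> (g^^m) (h p) = h ((f^^m) p) \<and> (f^^m) p \<in> X" for m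
  proof (induction m)
    case 0 then show ?case by simp
  next
    case (Suc m) then show ?case using g fX hX by auto
  qed
  have injg: "inj_on g Y"
  proof (rule inj_onI)
    fix a b assume "a \<in> Y" "b \<in> Y" "g a = g b"
    then have "k (h (f (k a))) = k (h (f (k b)))" using g by auto
    then have "f' (f (k a)) = f' (f (k b))" using hX fX \<open>a \<in> Y\<close> \<open>b \<in> Y\<close> by auto
    then have "h (k a) = h (k b)" using hX fX \<open>a \<in> Y\<close> \<open>b \<in> Y\<close> by auto
    then show "a = b" using hX \<open>a \<in> Y\<close> \<open>b \<in> Y\<close> by auto
  qed
  have invg: "inv_into Y g (h q) = h (inv_into X f q)" if "q \<in> X" for q
  proof -
    have "inv_into Y g (h q) = h (f' q)"
      by (rule inv_into_f_eq[OF injg]) (use that g fX hX in auto)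
    then show ?thesis using homeo_inv_into[OF f that] by simp
  qed
  have neg: "\<And>p. p \<in> X \<Longrightarrow> (inv_into Y g^^m) (h p) = h ((inv_into X f^^m) p) \<and> (inv_into X f^^m) p \<in> X" for m
  proof (induction m)
    case 0 then show ?case by simp
  next
    case (Suc m) then show ?case using invg homeo_inv_into[OF f] fX by auto
  qed
  show ?thesis unfolding zpow_def using pos[OF p] neg[OF p] by auto
qed

lemma zpow_in:
  assumes f: "homeomorphism X X f f'" and p: "p \<in> X"
  shows "zpow X f n p \<in> X"
  using zpow_cont[OF f] p by auto

lemma transfer:
  fixes X :: "'a::metric_space set" and Y :: "'b::metric_space set"
  assumes cX: "compact X" and cY: "compact Y"
    and f: "homeomorphism X X f f'" and h: "homeomorphism X Y h k"
    and sM: "sets M = sets (restrict_space borel X)" and sN: "sets N = sets (restrict_space borel Y)"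
    and eN: "\<forall>A\<in>sets N. emeasure N A = emeasure M (h -` A \<inter> X)"
    and g: "\<forall>y\<in>Y. g y = h (f (k y))"
  shows "h ` UE M f X \<subseteq> UE N g Y \<and> h ` Sh M f X \<subseteq> Sh N g Y"
proof -
  have fX: "\<And>x. x \<in> X \<Longrightarrow> f x \<in> X"
    using f unfolding homeomorphism_def by auto
  have hX: "\<And>x. x \<in> X \<Longrightarrow> h x \<in> Y" "\<And>y. y \<in> Y \<Longrightarrow> k y \<in> X"
    "\<And>x. x \<in> X \<Longrightarrow> k (h x) = x" "\<And>y. y \<in> Y \<Longrightarrow> h (k y) = y"
    using h unfolding homeomorphism_def by auto
  have uh: "uniformly_continuous_on X h" "uniformly_continuous_on Y k"
    using h cX cY compact_uniformly_continuous unfolding homeomorphism_def by auto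
  have spM: "space M = X" using sets_eq_imp_space_eq[OF sM] by (simp add: space_restrict_space)
  have spN: "space N = Y" using sets_eq_imp_space_eq[OF sN] by (simp add: space_restrict_space)
  have UE: "h x \<in> UE N g Y" if x: "x \<in> UE M f X" for x
  proof -
    obtain c where c: "c > 0" "x \<in> X" and G: "\<forall>z \<in> ball x c \<inter> X. emeasure M (Gamma X f c x z) = 0"
      using x unfolding UE_def by auto
    obtain d where d: "d > 0" "\<forall>a\<in>Y. \<forall>b\<in>Y. dist b a < d \<longrightarrow> dist (k b) (k a) < c"
      using uh(2) c(1) unfolding uniformly_continuous_on_def by blast
    define c' where "c' = d / 2"
    have c': "c' > 0" "\<And>a b. a \<in> Y \<Longrightarrow> b \<in> Y \<Longrightarrow> dist a b \<le> c' \<Longrightarrow> dist (k a) (k b) < c"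
      using d unfolding c'_def by (auto simp: dist_commute)
    have "emeasure N (Gamma Y g c' (h x) z') = 0" if z': "z' \<in> ball (h x) c' \<inter> Y" for z'
    proof (cases "Gamma Y g c' (h x) z' \<in> sets N")
      case False then show ?thesis by (simp add: emeasure_notin_sets)
    next
      case True
      define z where "z = k z'"
      have zX: "z \<in> ball x c \<inter> X" using z' c' hX c unfolding z_def by (auto intro!: c'(2)[of "h x" z', simplified hX(3)[OF c(2)]])
      have sub: "h -` Gamma Y g c' (h x) z' \<inter> X \<subseteq> Gamma X f c x z"
      proof
        fix p assume p: "p \<in> h -` Gamma Y g c' (h x) z' \<inter> X"
        then have pX: "p \<in> X" and hp: "dist (h x) (h p) < c'"
          and it: "\<And>n. dist (zpow Y g n (h p)) (zpow Y g n z') \<le> c'"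
          unfolding Gamma_def by auto
        have z'eq: "z' = h z" using z' hX unfolding z_def by auto
        have "dist (k (h x)) (k (h p)) < c" using c'(2)[of "h x" "h p"] hp hX pX c by auto
        then have "p \<in> ball x c" using hX pX c by auto
        moreover have "dist (zpow X f n p) (zpow X f n z) \<le> c" for n
        proof -
          have "dist (h (zpow X f n p)) (h (zpow X f n z)) \<le> c'"
            using it[of n] zpow_conj[OF f h g pX, of n] zpow_conj[OF f h g, of z n] zX z'eq by auto
          then have "dist (k (h (zpow X f n p))) (k (h (zpow X f n z))) < c"
            using c'(2)[of "h (zpow X f n p)" "h (zpow X f n z)"] hX zpow_in[OF f] pX zX by auto
          then show ?thesis using hX zpow_in[OF f] pX zX by auto
        qed
        ultimately show "p \<in> Gamma X f c x z" unfolding Gamma_def using pX by auto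
      qed
      have GM: "Gamma X f c x z \<in> sets M" using Gamma_meas[OF cX f] sM by auto
      have "emeasure N (Gamma Y g c' (h x) z') = emeasure M (h -` Gamma Y g c' (h x) z' \<inter> X)"
        using eN True by auto
      also have "\<dots> \<le> emeasure M (Gamma X f c x z)" by (rule emeasure_mono[OF sub GM])
      also have "\<dots> = 0" using G zX by auto
      finally show ?thesis by simp
    qed
    then show ?thesis unfolding UE_def using c' hX c by auto
  qed
  have SH: "h x \<in> Sh N g Y" if x: "x \<in> Sh M f X" for x
  proof -
    have xX: "x \<in> X" using x unfolding Sh_def by auto
    have "\<exists>\<delta>>0. \<exists>B \<in> sets N. emeasure N (Y - B) = 0 \<and>
      (\<forall>ys. pseudo_orbit Y g \<delta> ys \<and> ys 0 \<in> B \<inter> ball (h x) \<delta> \<longrightarrow> traced Y g \<epsilon>' ys)"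
      if e': "\<epsilon>' > 0" for \<epsilon>'
    proof -
      obtain \<epsilon> where e: "\<epsilon> > 0" "\<forall>a\<in>X. \<forall>b\<in>X. dist b a < \<epsilon> \<longrightarrow> dist (h b) (h a) < \<epsilon>'"
        using uh(1) e' unfolding uniformly_continuous_on_def by blast
      obtain \<delta> B where dB: "\<delta> > 0" "B \<in> sets M" "emeasure M (X - B) = 0"
        and tr: "\<forall>xs. pseudo_orbit X f \<delta> xs \<and> xs 0 \<in> B \<inter> ball x \<delta> \<longrightarrow> traced X f \<epsilon> xs"
        using x e(1) unfolding Sh_def by blast
      obtain \<delta>' where d': "\<delta>' > 0" "\<forall>a\<in>Y. \<forall>b\<in>Y. dist b a < \<delta>' \<longrightarrow> dist (k b) (k a) < \<delta>"
        using uh(2) dB(1) unfolding uniformly_continuous_on_def by blast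
      have BX: "B \<subseteq> X" using sets.sets_into_space[OF dB(2)] spM by simp
      define B' where "B' = k -` B \<inter> Y"
      have kmeas: "k \<in> measurable N M"
      proof -
        have "k \<in> measurable (restrict_space borel Y) (restrict_space borel X)"
          using h hX unfolding homeomorphism_def
          by (intro measurable_restrict_space2 borel_measurable_continuous_on_restrict)
             (auto simp: space_restrict_space)
        then show ?thesis using measurable_cong_sets[OF sN sM] by simp
      qed
      have B': "B' \<in> sets N" unfolding B'_def using measurable_sets[OF kmeas dB(2)] spN by simp
      have "Y - B' \<in> sets N" using B' spN by (metis sets.compl_sets)
      then have "emeasure N (Y - B') = emeasure M (h -` (Y - B') \<inter> X)" using eN by auto
      also have "h -` (Y - B') \<inter> X = X - B" unfolding B'_def using hX by auto
      finally have e0: "emeasure N (Y - B') = 0" using dB by simp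
      have "traced Y g \<epsilon>' ys" if ys: "pseudo_orbit Y g \<delta>' ys" "ys 0 \<in> B' \<inter> ball (h x) \<delta>'" for ys
      proof -
        define xs where "xs = k \<circ> ys"
        have ysY: "\<And>n. ys n \<in> Y" using ys unfolding pseudo_orbit_def by auto
        have "pseudo_orbit X f \<delta> xs" unfolding pseudo_orbit_def
        proof (intro conjI allI)
          fix n
          show "xs n \<in> X" using ysY hX unfolding xs_def by auto
          have "dist (g (ys n)) (ys (n+1)) < \<delta>'" using ys unfolding pseudo_orbit_def by auto
          moreover have "g (ys n) \<in> Y" using ysY g hX fX by auto
          ultimately have "dist (k (g (ys n))) (k (ys (n+1))) < \<delta>"
            using d'(2) ysY by (metis dist_commute)
          then show "dist (f (xs n)) (xs (n + 1)) < \<delta>"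
            using g ysY hX fX unfolding xs_def by auto
        qed
        moreover have "xs 0 \<in> B \<inter> ball x \<delta>"
        proof -
          have "dist (k (h x)) (k (ys 0)) < \<delta>" using d'(2) ys(2) ysY[of 0] hX(1)[OF xX] by (simp add: dist_commute)
          then show ?thesis using ys(2) hX xX unfolding xs_def B'_def by auto
        qed
        ultimately obtain p where p: "p \<in> X" "\<forall>n. dist (zpow X f n p) (xs n) < \<epsilon>"
          using tr unfolding traced_def by blast
        have "dist (zpow Y g n (h p)) (ys n) < \<epsilon>'" for n
        proof -
          have "dist (h (zpow X f n p)) (h (xs n)) < \<epsilon>'"
            using e(2) p(2) zpow_in[OF f p(1), of n] hX(2)[OF ysY[of n]] unfolding xs_def by (simp add: dist_commute)
          then show ?thesis using zpow_conj[OF f h g p(1)] ysY hX unfolding xs_def by auto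
        qed
        then show ?thesis unfolding traced_def using p hX by auto
      qed
      then show ?thesis using d' B' e0 by blast
    qed
    then show ?thesis unfolding Sh_def using hX xX by auto
  qed
  show ?thesis using UE SH by auto
qed

theorem proposition3p5:
  fixes X :: "'a::metric_space set" and Y :: "'b::metric_space set"
    and f :: "'a \<Rightarrow> 'a" and h :: "'a \<Rightarrow> 'b" and M :: "'a measure"
  assumes "compact X" and "compact Y"
    and "\<exists>g. homeomorphism X X f g"
    and "sets M = sets (restrict_space borel X)"
    and "emeasure M X > 0"
    and "\<exists>k. homeomorphism X Y h k"
  shows "UE (distr M (restrict_space borel Y) h) (h \<circ> f \<circ> inv_into X h) Y = h ` UE M f X \<and>
         Sh (distr M (restrict_space borel Y) h) (h \<circ> f \<circ> inv_into X h) Y = h ` Sh M f X"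
proof -
  obtain f' where f: "homeomorphism X X f f'" using assms(3) by blast
  obtain k where h: "homeomorphism X Y h k" using assms(6) by blast
  define N where "N = distr M (restrict_space borel Y) h"
  define g where "g = h \<circ> f \<circ> inv_into X h"
  have sM: "sets M = sets (restrict_space borel X)" by fact
  have sN: "sets N = sets (restrict_space borel Y)" unfolding N_def by simp
  have hX: "\<And>x. x \<in> X \<Longrightarrow> h x \<in> Y" "\<And>y. y \<in> Y \<Longrightarrow> k y \<in> X"
    "\<And>x. x \<in> X \<Longrightarrow> k (h x) = x" "\<And>y. y \<in> Y \<Longrightarrow> h (k y) = y"
    using h unfolding homeomorphism_def by auto
  have fX: "\<And>x. x \<in> X \<Longrightarrow> f x \<in> X" "\<And>x. x \<in> X \<Longrightarrow> f' x \<in> X"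
    "\<And>x. x \<in> X \<Longrightarrow> f (f' x) = x" "\<And>x. x \<in> X \<Longrightarrow> f' (f x) = x"
    using f unfolding homeomorphism_def by auto
  have spM: "space M = X" using sets_eq_imp_space_eq[OF sM] by (simp add: space_restrict_space)
  have invh: "inv_into X h y = k y" if "y \<in> Y" for y
    using h that
    by (metis hX(2,4) homeomorphism_def inj_on_inverseI inv_into_f_eq)
  have g: "\<forall>y\<in>Y. g y = h (f (k y))" using invh unfolding g_def by auto
  have hmeas: "h \<in> measurable M (restrict_space borel Y)"
  proof -
    have "h \<in> measurable (restrict_space borel X) (restrict_space borel Y)"
      using h hX unfolding homeomorphism_def
      by (intro measurable_restrict_space2 borel_measurable_continuous_on_restrict)
         (auto simp: space_restrict_space)
    then show ?thesis using measurable_cong_sets[OF sM refl, of "restrict_space borel Y"] by simp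
  qed
  have kmeas: "k \<in> measurable (restrict_space borel Y) (restrict_space borel X)"
      using h hX unfolding homeomorphism_def
      by (intro measurable_restrict_space2 borel_measurable_continuous_on_restrict)
         (auto simp: space_restrict_space)
  have eN: "\<forall>A\<in>sets N. emeasure N A = emeasure M (h -` A \<inter> X)"
    unfolding N_def using emeasure_distr[OF hmeas] spM by auto
  have eM: "\<forall>A\<in>sets M. emeasure M A = emeasure N (k -` A \<inter> Y)"
  proof
    fix A assume A: "A \<in> sets M"
    have AX: "A \<subseteq> X" using sets.sets_into_space[OF A] spM by simp
    have "k -` A \<inter> Y \<in> sets N" using measurable_sets[OF kmeas, of A] A sM sN
      by (simp add: space_restrict_space)
    then have "emeasure N (k -` A \<inter> Y) = emeasure M (h -` (k -` A \<inter> Y) \<inter> X)" using eN by auto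
    also have "h -` (k -` A \<inter> Y) \<inter> X = A" using AX hX by auto
    finally show "emeasure M A = emeasure N (k -` A \<inter> Y)" by simp
  qed
  have gh: "homeomorphism Y Y g (h \<circ> f' \<circ> k)"
  proof -
    have hh: "continuous_on Y k" "k ` Y = X" "continuous_on X h"
      "continuous_on X f" "f ` X = X" "continuous_on X f'" "f' ` X = X"
      using f h unfolding homeomorphism_def by auto
    have "continuous_on Y (f \<circ> k)" "continuous_on Y (f' \<circ> k)"
      using hh continuous_on_compose by metis+
    moreover have "(f \<circ> k) ` Y = X" "(f' \<circ> k) ` Y = X" using hh by (metis image_comp)+
    ultimately have c1: "continuous_on Y (h \<circ> f \<circ> k)" "continuous_on Y (h \<circ> f' \<circ> k)"
      using hh(3) continuous_on_compose by (metis comp_assoc)+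
    have "continuous_on Y g" using continuous_on_cong[of Y Y g "h \<circ> f \<circ> k"] c1 g by auto
    moreover have "g ` Y = Y"
    proof
      show "g ` Y \<subseteq> Y" using g hX fX by auto
      show "Y \<subseteq> g ` Y"
      proof
        fix y assume y: "y \<in> Y"
        have "y = g (h (f' (k y)))" using g hX fX y by auto
        moreover have "h (f' (k y)) \<in> Y" using hX fX y by auto
        ultimately show "y \<in> g ` Y" by blast
      qed
    qed
    moreover have "(h \<circ> f' \<circ> k) ` Y = Y"
    proof
      show "(h \<circ> f' \<circ> k) ` Y \<subseteq> Y" using hX fX by auto
      show "Y \<subseteq> (h \<circ> f' \<circ> k) ` Y"
      proof
        fix y assume y: "y \<in> Y"
        have "y = (h \<circ> f' \<circ> k) (h (f (k y)))" using hX fX y by auto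
        moreover have "h (f (k y)) \<in> Y" using hX fX y by auto
        ultimately show "y \<in> (h \<circ> f' \<circ> k) ` Y" by blast
      qed
    qed
    ultimately show ?thesis unfolding homeomorphism_def using c1 g hX fX by auto
  qed
  have f2: "\<forall>x\<in>X. f x = k (g (h x))" using g hX fX by auto
  have T1: "h ` UE M f X \<subseteq> UE N g Y \<and> h ` Sh M f X \<subseteq> Sh N g Y"
    by (rule transfer[OF assms(1,2) f h sM sN eN g])
  have T2: "k ` UE N g Y \<subseteq> UE M f X \<and> k ` Sh N g Y \<subseteq> Sh M f X"
    by (rule transfer[OF assms(2,1) gh homeomorphism_symD[OF h] sN sM eM f2])
  have UY: "UE N g Y \<subseteq> Y" "Sh N g Y \<subseteq> Y" unfolding UE_def Sh_def by auto
  have "UE N g Y = h ` UE M f X"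
  proof
    show "h ` UE M f X \<subseteq> UE N g Y" using T1 by blast
    show "UE N g Y \<subseteq> h ` UE M f X"
    proof
      fix y assume "y \<in> UE N g Y"
      then have "k y \<in> UE M f X" "y = h (k y)" using T2 UY hX by auto
      then show "y \<in> h ` UE M f X" by blast
    qed
  qed
  moreover have "Sh N g Y = h ` Sh M f X"
  proof
    show "h ` Sh M f X \<subseteq> Sh N g Y" using T1 by blast
    show "Sh N g Y \<subseteq> h ` Sh M f X"
    proof
      fix y assume "y \<in> Sh N g Y"
      then have "k y \<in> Sh M f X" "y = h (k y)" using T2 UY hX by auto
      then show "y \<in> h ` Sh M f X" by blast
    qed
  qed
  ultimately show ?thesis unfolding N_def g_def by simp
qed

end
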